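(* For every positive integer $n$, $$\big((\mathrm{Id}\cdot\mu)\ast\delta\big)(n)=-\big(\mathrm{Id}\ast(\mu\delta)\big)(n),$$ where $\mathrm{Id}\cdot\mu$ is $n\mapsto n\mu(n)$ and $\mu\delta$ is the pointwise product.
   Context: The arithmetic derivative $\delta$ is defined by $\delta(p)=1$ for every prime $p$ and $\delta(mn)=m\delta(n)+n\delta(m)$ for all positive integers $m,n$; equivalently $\delta(1)=0$ and $\delta(n)=n\sum_{p^\alpha\| n}\alpha/p$. $\mathrm{Id}(n)=n$, $\mu$ is the Möbius function. The Dirichlet convolution is $(u\ast v)(n)=\sum_{d\mid n}u(d)v(n/d)$. *)

theory Defs
  imports "HOL-Computational_Algebra.Computational_Algebra"
begin

definition moebius_mu :: "nat \<Rightarrow> int" where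
  "moebius_mu n = (if n = 0 \<or> \<not> squarefree n then 0
                   else (-1) ^ card (prime_factors n))"

(* arithmetic derivative: delta(n) = n * sum_{p^a || n} a/p ; delta(1) = 0; delta(0) = 0 by convention *)
definition arith_deriv :: "nat \<Rightarrow> int" where
  "arith_deriv n = (if n = 0 then 0 else
     int (\<Sum>p\<in>prime_factors n. multiplicity p n * (n div p)))"

definition dirichlet_conv :: "(nat \<Rightarrow> int) \<Rightarrow> (nat \<Rightarrow> int) \<Rightarrow> nat \<Rightarrow> int" where
  "dirichlet_conv u v n = (\<Sum>d | d dvd n. u d * v (n div d))"

end

theory Submission
  imports Defs
begin

lemma ad_alt:
  assumes "a > 0" "finite S" "prime_factors a \<subseteq> S" "\<forall>p\<in>S. prime p"
  shows "arith_deriv a = int (\<Sum>p\<in>S. multiplicity p a * (a div p))"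
proof -
  have "(\<Sum>p\<in>prime_factors a. multiplicity p a * (a div p)) = (\<Sum>p\<in>S. multiplicity p a * (a div p))"
  proof (rule sum.mono_neutral_left)
    show "\<forall>i\<in>S - prime_factors a. multiplicity i a * (a div i) = 0"
    proof
      fix p assume "p \<in> S - prime_factors a"
      with assms have "\<not> p dvd a" using prime_factorsI[of a p] by auto
      then show "multiplicity p a * (a div p) = 0" by (simp add: not_dvd_imp_multiplicity_0)
    qed
  qed (use assms in auto)
  then show ?thesis using assms by (simp add: arith_deriv_def)
qed

lemma term_split:
  fixes a b p :: nat
  assumes "prime p"
  shows "multiplicity p a * (a * b div p) = b * (multiplicity p a * (a div p))"
proof (cases "p dvd a")
  case True
  then have "a * b div p = b * (a div p)" by (metis div_mult_swap mult.commute)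
  then show ?thesis by simp
next
  case False
  then show ?thesis by (simp add: not_dvd_imp_multiplicity_0)
qed

lemma ad_mult:
  assumes "a > 0" "b > 0"
  shows "arith_deriv (a * b) = int a * arith_deriv b + int b * arith_deriv a"
proof -
  let ?S = "prime_factors a \<union> prime_factors b"
  have fin: "finite ?S" by simp
  have pr: "\<forall>p\<in>?S. prime p" by auto
  have pab: "prime_factors (a*b) = ?S" using assms by (simp add: prime_factors_product)
  have "arith_deriv (a*b) = int (\<Sum>p\<in>?S. multiplicity p (a*b) * (a*b div p))"
    using ad_alt[of "a*b" ?S] assms pab pr by simp
  also have "(\<Sum>p\<in>?S. multiplicity p (a*b) * (a*b div p))
      = (\<Sum>p\<in>?S. b * (multiplicity p a * (a div p)) + a * (multiplicity p b * (b div p)))"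
  proof (rule sum.cong)
    fix p assume "p \<in> ?S"
    then have "prime p" by auto
    then have "multiplicity p (a*b) = multiplicity p a + multiplicity p b"
      using assms by (simp add: prime_elem_multiplicity_mult_distrib)
    moreover have t2: "multiplicity p b * (a * b div p) = a * (multiplicity p b * (b div p))"
      using term_split[OF \<open>prime p\<close>, of b a] by (simp add: mult.commute)
    moreover have t1: "multiplicity p a * (a * b div p) = b * (multiplicity p a * (a div p))"
      by (rule term_split[OF \<open>prime p\<close>])
    ultimately show "multiplicity p (a*b) * (a*b div p) = b * (multiplicity p a * (a div p)) + a * (multiplicity p b * (b div p))"
      by (simp only: add_mult_distrib)
  qed simp
  also have "\<dots> = b * (\<Sum>p\<in>?S. multiplicity p a * (a div p)) + a * (\<Sum>p\<in>?S. multiplicity p b * (b div p))"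
    by (simp add: sum.distrib sum_distrib_left)
  finally show ?thesis
    using ad_alt[of a ?S] ad_alt[of b ?S] assms pr by (simp add: algebra_simps)
qed

lemma prod_primes_dvd:
  fixes n :: nat
  assumes "finite T" "T \<subseteq> prime_factors n"
  shows "\<Prod>T dvd n"
  using assms
proof (induction T rule: finite_induct)
  case empty then show ?case by simp
next
  case (insert p T)
  then have p: "prime p" "p dvd n" by auto
  have "coprime p (\<Prod>T)"
  proof (rule prod_coprime_right)
    fix q assume "q \<in> T"
    with insert have "prime q" "q \<noteq> p" by auto
    with p show "coprime p q" using primes_coprime by blast
  qed
  with insert p show ?case by (simp add: divides_mult)
qed

lemma mu_prod:
  fixes T :: "nat set"
  assumes "finite T" "\<forall>p\<in>T. prime p"
  shows "prime_factors (\<Prod>T) = T" "squarefree (\<Prod>T)" "moebius_mu (\<Prod>T) = (-1) ^ card T"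
proof -
  have nz: "0 \<notin> id ` T" using assms by auto
  show pf: "prime_factors (\<Prod>T) = T"
    using prime_factors_prod[OF assms(1) nz] assms by (simp add: prime_prime_factors)
  show sf: "squarefree (\<Prod>T)"
    using assms by (intro squarefree_prod_coprime[where f=id, simplified])
                   (auto simp: primes_coprime squarefree_prime)
  have "\<Prod>T \<noteq> 0" using assms by auto
  then show "moebius_mu (\<Prod>T) = (-1) ^ card T"
    using pf sf by (simp add: moebius_mu_def)
qed

lemma sf_prod:
  fixes d :: nat
  assumes "d > 0" "squarefree d"
  shows "\<Prod>(prime_factors d) = d"
proof -
  have "(\<Prod>p \<in> prime_factors d. p ^ multiplicity p d) = d"
    using prod_prime_factors[of d] assms by simp
  moreover have "(\<Prod>p \<in> prime_factors d. p ^ multiplicity p d) = \<Prod>(prime_factors d)"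
    using assms squarefree_factorial_semiring'[of d] by (intro prod.cong) auto
  ultimately show ?thesis by simp
qed

lemma mu_sum:
  fixes n :: nat
  assumes "n > 1"
  shows "(\<Sum>d | d dvd n. moebius_mu d) = 0"
proof -
  let ?A = "prime_factors n"
  let ?S = "{d. d dvd n \<and> squarefree d}"
  have finD: "finite {d. d dvd n}" using assms by simp
  have "(\<Sum>d | d dvd n. moebius_mu d) = (\<Sum>d\<in>?S. moebius_mu d)"
    by (rule sum.mono_neutral_right) (use finD in \<open>auto simp: moebius_mu_def\<close>)
  also have "bij_betw Prod (Pow ?A) ?S"
  proof (rule bij_betw_byWitness[where f' = prime_factors])
    show "\<forall>T\<in>Pow ?A. prime_factors (\<Prod>T) = T"
      using mu_prod(1) finite_subset by (metis PowD finite_set_mset in_prime_factors_imp_prime subset_iff)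
    show "\<forall>d\<in>?S. \<Prod>(prime_factors d) = d"
      using assms sf_prod by (metis (mono_tags, lifting) mem_Collect_eq not_squarefree_0 gr0I)
    show "Prod ` Pow ?A \<subseteq> ?S"
    proof
      fix d assume "d \<in> Prod ` Pow ?A"
      then obtain T where T: "T \<subseteq> ?A" "d = \<Prod>T" by auto
      then have fT: "finite T" using finite_subset by blast
      have "\<forall>p\<in>T. prime p" using T by auto
      then show "d \<in> ?S" using T fT prod_primes_dvd mu_prod(2) by auto
    qed
    show "prime_factors ` ?S \<subseteq> Pow ?A"
      using assms by (auto intro: dvd_prime_factors[THEN subsetD])
  qed
  then have "(\<Sum>d\<in>?S. moebius_mu d) = (\<Sum>T\<in>Pow ?A. moebius_mu (\<Prod>T))"
    by (simp add: sum.reindex_bij_betw)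
  also have "\<dots> = (\<Sum>T\<in>Pow ?A. (-1) ^ card T)"
  proof (rule sum.cong)
    fix T assume "T \<in> Pow ?A"
    then have "T \<subseteq> ?A" by auto
    then show "moebius_mu (\<Prod>T) = (-1) ^ card T"
      using mu_prod(3)[of T] finite_subset by auto
  qed simp
  also have "\<dots> = 0"
  proof -
    obtain p where "prime p" "p dvd n" using assms prime_factor_nat[of n] by auto
    then have "p \<in> ?A" using assms by (auto intro: prime_factorsI)
    have "(\<Prod>x\<in>?A. (1::int) - 1) = (\<Sum>X\<in>Pow ?A. (-1) ^ card X * (\<Prod>x\<in>X. 1) * (\<Prod>x\<in>?A-X. 1))"
      by (rule prod_diff_conv_sum) simp
    moreover have "(\<Prod>x\<in>?A. (1::int) - 1) = 0" using \<open>p \<in> ?A\<close>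
      by (metis diff_self prod_zero_iff finite_set_mset)
    ultimately show ?thesis by simp
  qed
  finally show ?thesis .
qed

theorem corollary2p6:
  fixes n :: nat
  assumes "n > 0"
  shows "dirichlet_conv (\<lambda>k. int k * moebius_mu k) arith_deriv n
       = - dirichlet_conv (\<lambda>k. int k) (\<lambda>k. moebius_mu k * arith_deriv k) n"
proof -
  let ?D = "{d. d dvd n}"
  have finD: "finite ?D" using assms by simp
  have R: "dirichlet_conv (\<lambda>k. int k) (\<lambda>k. moebius_mu k * arith_deriv k) n
      = (\<Sum>d\<in>?D. int (n div d) * (moebius_mu d * arith_deriv d))"
    unfolding dirichlet_conv_def
    by (rule sum.reindex_bij_witness[where i="\<lambda>d. n div d" and j="\<lambda>d. n div d"])
       (use assms in \<open>auto simp: div_div_eq_right dvd_div_eq_mult intro: dvd_div_eq_mult\<close>)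
  have "dirichlet_conv (\<lambda>k. int k * moebius_mu k) arith_deriv n
      + (\<Sum>d\<in>?D. int (n div d) * (moebius_mu d * arith_deriv d))
      = (\<Sum>d\<in>?D. moebius_mu d * arith_deriv n)"
    unfolding dirichlet_conv_def sum.distrib[symmetric]
  proof (rule sum.cong)
    fix d assume "d \<in> ?D"
    then have d: "d dvd n" by simp
    then have pos: "d > 0" "n div d > 0" using assms by (auto intro!: Nat.gr0I simp: dvd_div_eq_0_iff)
    have "n = d * (n div d)" using d by simp
    then have "arith_deriv n = int d * arith_deriv (n div d) + int (n div d) * arith_deriv d"
      using ad_mult[OF pos] by simp
    then show "int d * moebius_mu d * arith_deriv (n div d) + int (n div d) * (moebius_mu d * arith_deriv d)
       = moebius_mu d * arith_deriv n" by (simp add: algebra_simps)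
  qed simp
  also have "\<dots> = 0"
  proof (cases "n = 1")
    case True then show ?thesis by (simp add: arith_deriv_def)
  next
    case False
    then show ?thesis using mu_sum[of n] assms by (simp add: sum_distrib_right[symmetric])
  qed
  finally show ?thesis using R by simp
qed

end
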